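(* Let $n,r\ge1$, let $D=\{(\mathbf s_1,\mathbf t_1),\dots,(\mathbf s_r,\mathbf t_r)\}\subset\mathbb F_2^n\times\mathbb F_2^n$, fix $i\in\{1,\dots,n\}$, and let $f_i$, $p$, $I=\langle p\rangle$, $W_S$ and $$\Phi:\overline{\mathbb F}_2[\{c_S:S\subseteq[n]\}]\to\overline{\mathbb F}_2[\{b_H:H\subseteq[n]\}],\quad c_S\mapsto W_S,$$ be as follows: $f_i=\sum_{j=1}^r t_{j,i}\prod_{e=1}^n(1-(x_e-s_{j,e}))$, $p=\prod_{j=1}^r\bigl(1-\prod_{e=1}^n(1-(x_e-s_{j,e}))\bigr)$, and $W_S$ is the coefficient of $\prod_{l\in S}x_l$ in the reduction modulo $\langle x_e^2-x_e\rangle$ of $f_i+\bigl(\sum_{H\subseteq[n]}b_H\prod_{l\in H}x_l\bigr)p$. Let $\mathbb I(V^{ncf})=\bigcap_\sigma I_\sigma$ (intersection over all permutations $\sigma$ of $[n]$), where $$I_\sigma=\Bigl\langle c_{[n]}-1,\; c_S-c_{[r_S^\sigma]}\prod_{\sigma(k)\in[r_S^\sigma]\setminus S}c_{[n]\setminus\{\sigma(k)\}}\;:\;S\subsetneq[n]\Bigr\rangle\subseteq\overline{\mathbb F}_2[\{c_S:S\subseteq[n]\}].$$ Then the ideal of all nested canalyzing functions that fit the data set $D$ is $\mathbb I(V^{ncf})+\ker(\Phi)$; that is, the $\mathbb F_2$-rational points of $\mathbb V(\mathbb I(V^{ncf})+\ker\Phi)$, identified with Boolean polynomials via $(c_S)\leftrightarrow\sum_S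 c_S\prod_{l\in S}x_l$, are exactly the nested canalyzing functions $h$ on $n$ variables with $h(\mathbf s_j)=t_{j,i}$ for $j=1,\dots,r$.
   Context: Boolean functions $\mathbb F_2^n\to\mathbb F_2$ are identified with elements $\sum_{S\subseteq[n]}c_S\prod_{l\in S}x_l$ of $\mathbb F_2[x_1,\dots,x_n]/\langle x_e^2-x_e\rangle$ and with coefficient vectors $(c_S)\in\mathbb F_2^{2^n}$; $[n]=\{1,\dots,n\}$. A function "on $n$ variables" depends on each variable. A Boolean function $h$ on $n$ variables is nested canalyzing if there exist a permutation $\sigma$ of $[n]$ and $a_1,\dots,a_n,b_1,\dots,b_n\in\mathbb F_2$ such that $h(x)=b_k$ whenever $x_{\sigma(1)}\ne a_1,\dots,x_{\sigma(k-1)}\ne a_{k-1}$ and $x_{\sigma(k)}=a_k$ ($k=1,\dots,n$), and $h(x)=\overline{b_n}=1+b_n$ when $x_{\sigma(k)}\ne a_k$ for all $k$. For a permutation $\sigma$, the order $<_\sigma$ on $[n]$ is $\sigma(k)<_\sigma\sigma(l)\iff k<l$; for nonempty $S\subseteq[n]$, $r_S^\sigma$ denotes the index $m$ such that $\sigma(m)$ is the $<_\sigma$-largest element of $S$, and $[r_S^\sigma]=\{\sigma(1),\dots,\sigma(r_S^\sigma)\}$ (for $S=\emptyset$ the completion is empty). $V^{ncf}\subseteq\mathbb F_2^{2^n}$ denotes the set of coefficient vectors of all nested canalyzing functions, $V^{ncf}=\bigcup_\sigma V_\sigma^{ncf}$ with $V_\sigma^{ncf}$ the vectors with $c_{[n]}=1$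 and $c_S=c_{[r_S^\sigma]}\prod_{\sigma(k)\in[r_S^\sigma]\setminus S}c_{[n]\setminus\{\sigma(k)\}}$; its ideal is $\bigcap_\sigma I_\sigma$. $\overline{\mathbb F}_2$ is the algebraic closure of $\mathbb F_2$. *)

theory Defs
  imports "HOL-Library.Poly_Mapping" "HOL-Library.Z2"
    "HOL-Algebra.Algebraic_Closure_Type" "HOL-Combinatorics.Permutations"
begin

(* Multiplication is the convolution product provided by Poly_Mapping. *)
type_synonym ('v, 'k) mpoly = "('v \<Rightarrow>\<^sub>0 nat) \<Rightarrow>\<^sub>0 'k"

type_synonym F2bar = "bit alg_closure"

definition Var :: "'v \<Rightarrow> ('v, 'k::comm_ring_1) mpoly" where
  "Var v = Poly_Mapping.single (Poly_Mapping.single v 1) 1"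

definition Const :: "'k \<Rightarrow> ('v, 'k::zero) mpoly" where
  "Const a = Poly_Mapping.single 0 a"

definition mpoly_hom :: "('k::zero \<Rightarrow> 'r::comm_ring_1) \<Rightarrow> ('v \<Rightarrow> 'r) \<Rightarrow> ('v, 'k) mpoly \<Rightarrow> 'r" where
  "mpoly_hom phi a P = (\<Sum>m\<in>Poly_Mapping.keys P. phi (Poly_Mapping.lookup P m) * (\<Prod>v\<in>Poly_Mapping.keys (m::'v \<Rightarrow>\<^sub>0 nat). a v ^ Poly_Mapping.lookup m v))"

definition mpoly_eval :: "('v, 'k::comm_ring_1) mpoly \<Rightarrow> ('v \<Rightarrow> 'k) \<Rightarrow> 'k" where
  "mpoly_eval P a = mpoly_hom id a P"

definition mpoly_vars :: "('v, 'k::zero) mpoly \<Rightarrow> 'v set" where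
  "mpoly_vars P = (\<Union>m\<in>Poly_Mapping.keys P. Poly_Mapping.keys m)"

(* the polynomial ring F2bar[ c_S : S \<subseteq> [n] ] (resp. F2bar[ b_H : H \<subseteq> [n] ]) *)
definition PolyRing :: "nat \<Rightarrow> (nat set, F2bar) mpoly set" where
  "PolyRing n = {P. mpoly_vars P \<subseteq> Pow {1..n}}"

definition ideal_span :: "'a::comm_ring_1 set \<Rightarrow> 'a set \<Rightarrow> 'a set" where
  "ideal_span R G = {(\<Sum>g\<in>F. q g * g) | F q. finite F \<and> F \<subseteq> G \<and> (\<forall>g\<in>F. q g \<in> R)}"

definition ideal_plus :: "'a::comm_ring_1 set \<Rightarrow> 'a set \<Rightarrow> 'a set" where
  "ideal_plus I J = {a + b | a b. a \<in> I \<and> b \<in> J}"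

definition r_idx :: "(nat \<Rightarrow> nat) \<Rightarrow> nat \<Rightarrow> nat set \<Rightarrow> nat" where
  "r_idx \<sigma> n S = (if S = {} then 0 else Max {k \<in> {1..n}. \<sigma> k \<in> S})"

definition completion :: "(nat \<Rightarrow> nat) \<Rightarrow> nat \<Rightarrow> nat set \<Rightarrow> nat set" where
  "completion \<sigma> n S = \<sigma> ` {1..r_idx \<sigma> n S}"

definition I_sigma :: "nat \<Rightarrow> (nat \<Rightarrow> nat) \<Rightarrow> (nat set, F2bar) mpoly set" where
  "I_sigma n \<sigma> = ideal_span (PolyRing n)
     ({Var {1..n} - 1} \<union>
      {Var S - Var (completion \<sigma> n S) *
          (\<Prod>k\<in>{k \<in> {1..r_idx \<sigma> n S}. \<sigma> k \<notin> S}. Var ({1..n} - {\<sigma> k})) | S. S \<subset> {1..n}})"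

definition I_Vncf :: "nat \<Rightarrow> (nat set, F2bar) mpoly set" where
  "I_Vncf n = (\<Inter>\<sigma>\<in>{\<sigma>. \<sigma> permutes {1..n}}. I_sigma n \<sigma>)"

definition emb :: "bit \<Rightarrow> F2bar" where
  "emb b = (if b = 0 then 0 else 1)"

(* polynomials in x_1..x_n with coefficients in F2bar[b_H] *)
type_synonym xpoly = "(nat, (nat set, F2bar) mpoly) mpoly"

definition XC :: "bit \<Rightarrow> xpoly" where
  "XC a = Const (Const (emb a))"

definition delta :: "nat \<Rightarrow> (nat \<Rightarrow> bit) \<Rightarrow> xpoly" where
  "delta n sj = (\<Prod>e\<in>{1..n}. 1 - (Var e - XC (sj e)))"

definition f_data :: "nat \<Rightarrow> nat \<Rightarrow> (nat \<Rightarrow> nat \<Rightarrow> bit) \<Rightarrow> (nat \<Rightarrow> nat \<Rightarrow> bit) \<Rightarrow> nat \<Rightarrow> xpoly" where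
  "f_data n r s t i = (\<Sum>j\<in>{1..r}. XC (t j i) * delta n (s j))"

definition p_data :: "nat \<Rightarrow> nat \<Rightarrow> (nat \<Rightarrow> nat \<Rightarrow> bit) \<Rightarrow> xpoly" where
  "p_data n r s = (\<Prod>j\<in>{1..r}. 1 - delta n (s j))"

definition B_poly :: "nat \<Rightarrow> xpoly" where
  "B_poly n = (\<Sum>H\<in>Pow {1..n}. Const (Var H) * (\<Prod>l\<in>H. Var l))"

(* W_S: coefficient of prod_{l\<in>S} x_l in the reduction of f_i + B p modulo <x_e^2 - x_e>;
   the reduction sends the monomial x^m to prod_{l \<in> supp m} x_l *)
definition W :: "nat \<Rightarrow> nat \<Rightarrow> (nat \<Rightarrow> nat \<Rightarrow> bit) \<Rightarrow> (nat \<Rightarrow> nat \<Rightarrow> bit) \<Rightarrow> nat \<Rightarrow> nat set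
                 \<Rightarrow> (nat set, F2bar) mpoly" where
  "W n r s t i S =
     (let P = f_data n r s t i + B_poly n * p_data n r s
      in \<Sum>m\<in>{m \<in> Poly_Mapping.keys P. Poly_Mapping.keys m = S}. Poly_Mapping.lookup P m)"

definition Phi :: "nat \<Rightarrow> nat \<Rightarrow> (nat \<Rightarrow> nat \<Rightarrow> bit) \<Rightarrow> (nat \<Rightarrow> nat \<Rightarrow> bit) \<Rightarrow> nat
                   \<Rightarrow> (nat set, F2bar) mpoly \<Rightarrow> (nat set, F2bar) mpoly" where
  "Phi n r s t i P = mpoly_hom Const (W n r s t i) P"

definition ker_Phi :: "nat \<Rightarrow> nat \<Rightarrow> (nat \<Rightarrow> nat \<Rightarrow> bit) \<Rightarrow> (nat \<Rightarrow> nat \<Rightarrow> bit) \<Rightarrow> nat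
                       \<Rightarrow> (nat set, F2bar) mpoly set" where
  "ker_Phi n r s t i = {P \<in> PolyRing n. Phi n r s t i P = 0}"

definition bool_fun :: "nat \<Rightarrow> (nat set \<Rightarrow> bit) \<Rightarrow> (nat \<Rightarrow> bit) \<Rightarrow> bit" where
  "bool_fun n c x = (\<Sum>S\<in>Pow {1..n}. c S * (\<Prod>l\<in>S. x l))"

definition depends_on_all :: "nat \<Rightarrow> ((nat \<Rightarrow> bit) \<Rightarrow> bit) \<Rightarrow> bool" where
  "depends_on_all n h = (\<forall>e\<in>{1..n}. \<exists>x. h x \<noteq> h (x(e := 1 + x e)))"

definition nested_canalyzing :: "nat \<Rightarrow> ((nat \<Rightarrow> bit) \<Rightarrow> bit) \<Rightarrow> bool" where
  "nested_canalyzing n h =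
     (depends_on_all n h \<and>
      (\<exists>\<sigma> a b. \<sigma> permutes {1..n} \<and>
        (\<forall>x. (\<forall>k\<in>{1..n}. (\<forall>l\<in>{1..<k}. x (\<sigma> l) \<noteq> a l) \<and> x (\<sigma> k) = a k \<longrightarrow> h x = b k)
           \<and> ((\<forall>k\<in>{1..n}. x (\<sigma> k) \<noteq> a k) \<longrightarrow> h x = 1 + b n))))"

end

theory Submission
  imports Defs
begin


definition rhom :: "('a::comm_ring_1 \<Rightarrow> 'b::comm_ring_1) \<Rightarrow> bool" where
  "rhom f \<longleftrightarrow> f 0 = 0 \<and> f 1 = 1 \<and> (\<forall>x y. f (x + y) = f x + f y) \<and> (\<forall>x y. f (x * y) = f x * f y)"

lemma rhom_0: "rhom f \<Longrightarrow> f 0 = 0" by (simp add: rhom_def)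
lemma rhom_1: "rhom f \<Longrightarrow> f 1 = 1" by (simp add: rhom_def)
lemma rhom_add: "rhom f \<Longrightarrow> f (x + y) = f x + f y" by (simp add: rhom_def)
lemma rhom_mult: "rhom f \<Longrightarrow> f (x * y) = f x * f y" by (simp add: rhom_def)
lemma rhom_uminus: "rhom f \<Longrightarrow> f (- x) = - f x"
proof -
  assume h: "rhom f"
  have "f (- x) + f x = 0" using rhom_add[OF h, of "-x" x] rhom_0[OF h] by simp
  thus ?thesis by (simp add: eq_neg_iff_add_eq_0)
qed
lemma rhom_diff: "rhom f \<Longrightarrow> f (x - y) = f x - f y"
  using rhom_add[of f x "-y"] rhom_uminus[of f y] by simp
lemma rhom_sum: "rhom f \<Longrightarrow> f (\<Sum>x\<in>A. g x) = (\<Sum>x\<in>A. f (g x))"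
  by (induction A rule: infinite_finite_induct) (auto simp: rhom_0 rhom_add)
lemma rhom_prod: "rhom f \<Longrightarrow> f (\<Prod>x\<in>A. g x) = (\<Prod>x\<in>A. f (g x))"
  by (induction A rule: infinite_finite_induct) (auto simp: rhom_1 rhom_mult)
lemma rhom_power: "rhom f \<Longrightarrow> f (x ^ k) = f x ^ k"
  by (induction k) (auto simp: rhom_1 rhom_mult)
lemma rhom_id: "rhom id" by (simp add: rhom_def)
lemma rhom_comp: "rhom f \<Longrightarrow> rhom g \<Longrightarrow> rhom (f \<circ> g)" by (simp add: rhom_def)

lemma rhom_Const: "rhom (Const :: 'a::comm_ring_1 \<Rightarrow> ('v, 'a) mpoly)"
  unfolding rhom_def Const_def by (simp add: single_add mult_single)

lemma emb_to_ac: "emb = to_ac"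
proof
  fix b :: bit show "emb b = to_ac b" by (cases "b = 0") (auto simp: emb_def)
qed

lemma rhom_emb: "rhom emb" unfolding emb_to_ac rhom_def
  by (intro conjI allI) (rule to_ac_0 to_ac_1 to_ac_add to_ac_mult)+

definition mmon :: "('v \<Rightarrow> 'r::comm_ring_1) \<Rightarrow> ('v \<Rightarrow>\<^sub>0 nat) \<Rightarrow> 'r" where
  "mmon a m = (\<Prod>v\<in>Poly_Mapping.keys m. a v ^ Poly_Mapping.lookup m v)"

lemma mon_superset:
  assumes "finite K" "Poly_Mapping.keys m \<subseteq> K"
  shows "mmon a m = (\<Prod>v\<in>K. a v ^ Poly_Mapping.lookup m v)"
  unfolding mmon_def
  by (rule prod.mono_neutral_left) (use assms in \<open>auto simp: in_keys_iff\<close>)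

lemma mon_add: "mmon a (m + m') = mmon a m * mmon a m'"
proof -
  let ?K = "Poly_Mapping.keys m \<union> Poly_Mapping.keys m'"
  have "mmon a (m + m') = (\<Prod>v\<in>?K. a v ^ Poly_Mapping.lookup (m + m') v)"
    by (rule mon_superset) (simp_all add: keys_add)
  also have "\<dots> = (\<Prod>v\<in>?K. a v ^ Poly_Mapping.lookup m v) * (\<Prod>v\<in>?K. a v ^ Poly_Mapping.lookup m' v)"
    by (simp add: lookup_add power_add prod.distrib)
  also have "\<dots> = mmon a m * mmon a m'"
    by (subst (1 2) mon_superset[of ?K]) auto
  finally show ?thesis .
qed

lemma mon_zero: "mmon a 0 = 1" by (simp add: mmon_def)

lemma mpoly_hom_mon: "mpoly_hom phi a P = (\<Sum>m\<in>Poly_Mapping.keys P. phi (Poly_Mapping.lookup P m) * mmon a m)"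
  by (simp add: mpoly_hom_def mmon_def)

lemma mpoly_hom_superset:
  assumes "phi 0 = 0" "finite K" "Poly_Mapping.keys P \<subseteq> K"
  shows "mpoly_hom phi a P = (\<Sum>m\<in>K. phi (Poly_Mapping.lookup P m) * mmon a m)"
  unfolding mpoly_hom_mon
  by (rule sum.mono_neutral_left) (use assms in \<open>auto simp: in_keys_iff\<close>)

lemma mpoly_hom_add:
  assumes "rhom phi"
  shows "mpoly_hom phi a (P + Q) = mpoly_hom phi a P + mpoly_hom phi a Q"
proof -
  let ?K = "Poly_Mapping.keys P \<union> Poly_Mapping.keys Q"
  have "mpoly_hom phi a (P + Q) = (\<Sum>m\<in>?K. phi (Poly_Mapping.lookup (P + Q) m) * mmon a m)"
    by (rule mpoly_hom_superset) (use keys_add[of P Q] rhom_0[OF assms] in auto)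
  also have "\<dots> = (\<Sum>m\<in>?K. phi (Poly_Mapping.lookup P m) * mmon a m) + (\<Sum>m\<in>?K. phi (Poly_Mapping.lookup Q m) * mmon a m)"
    by (simp add: lookup_add rhom_add[OF assms] distrib_right sum.distrib)
  also have "\<dots> = mpoly_hom phi a P + mpoly_hom phi a Q"
    by (subst (1 2) mpoly_hom_superset[of phi ?K]) (auto simp: rhom_0[OF assms])
  finally show ?thesis .
qed

lemma mpoly_hom_zero: "mpoly_hom phi a 0 = 0" by (simp add: mpoly_hom_def)

lemma mpoly_hom_single:
  assumes "phi 0 = 0"
  shows "mpoly_hom phi a (Poly_Mapping.single m c) = phi c * mmon a m"
  using assms by (simp add: mpoly_hom_mon)

lemma mpoly_hom_sum:
  assumes "rhom phi"
  shows "mpoly_hom phi a (\<Sum>x\<in>A. g x) = (\<Sum>x\<in>A. mpoly_hom phi a (g x))"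
  by (induction A rule: infinite_finite_induct) (auto simp: mpoly_hom_zero mpoly_hom_add[OF assms])

lemma poly_mapping_expand:
  "P = (\<Sum>m\<in>Poly_Mapping.keys P. Poly_Mapping.single m (Poly_Mapping.lookup P m))"
proof (rule poly_mapping_eqI)
  fix k
  show "Poly_Mapping.lookup P k = Poly_Mapping.lookup (\<Sum>m\<in>Poly_Mapping.keys P. Poly_Mapping.single m (Poly_Mapping.lookup P m)) k"
    by (simp add: lookup_sum lookup_single when_def in_keys_iff)
qed

lemma mpoly_hom_mult:
  assumes "rhom phi"
  shows "mpoly_hom phi a (P * Q) = mpoly_hom phi a P * mpoly_hom phi a Q"
proof -
  let ?s = "\<lambda>P m. Poly_Mapping.single m (Poly_Mapping.lookup P m)"
  have "P * Q = (\<Sum>m\<in>Poly_Mapping.keys P. ?s P m) * (\<Sum>m'\<in>Poly_Mapping.keys Q. ?s Q m')"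
    by (subst (1) poly_mapping_expand, subst (2) poly_mapping_expand) (rule refl)
  also have "\<dots> = (\<Sum>m\<in>Poly_Mapping.keys P. \<Sum>m'\<in>Poly_Mapping.keys Q. ?s P m * ?s Q m')"
    by (rule sum_product)
  finally have PQ: "P * Q = \<dots>" .
  have "mpoly_hom phi a (P * Q) = (\<Sum>m\<in>Poly_Mapping.keys P. \<Sum>m'\<in>Poly_Mapping.keys Q.
           phi (Poly_Mapping.lookup P m) * mmon a m * (phi (Poly_Mapping.lookup Q m') * mmon a m'))"
    unfolding PQ mpoly_hom_sum[OF assms] mult_single
    by (simp add: mpoly_hom_single rhom_0[OF assms] rhom_mult[OF assms] mon_add mult_ac)
  also have "\<dots> = mpoly_hom phi a P * mpoly_hom phi a Q"
    unfolding mpoly_hom_mon sum_product ..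
  finally show ?thesis .
qed

lemma mpoly_hom_one:
  assumes "rhom phi" shows "mpoly_hom phi a 1 = 1"
proof -
  have "mpoly_hom phi a 1 = mpoly_hom phi a (Poly_Mapping.single 0 1)" by simp
  also have "\<dots> = 1" by (simp only: mpoly_hom_single[of phi, OF rhom_0[OF assms]] rhom_1[OF assms] mon_zero mult_1)
  finally show ?thesis .
qed

lemma rhom_mpoly_hom: "rhom phi \<Longrightarrow> rhom (mpoly_hom phi a)"
  unfolding rhom_def[of "mpoly_hom phi a"]
  by (auto simp: mpoly_hom_zero mpoly_hom_one mpoly_hom_add mpoly_hom_mult)

lemma mpoly_hom_Const: "rhom phi \<Longrightarrow> mpoly_hom phi a (Const c) = phi c"
  by (simp add: Const_def mpoly_hom_single rhom_0 mon_zero)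

lemma mpoly_hom_Var: "rhom phi \<Longrightarrow> mpoly_hom phi a (Var v) = a v"
  by (simp add: Var_def mpoly_hom_single rhom_0 rhom_1 mmon_def)

lemma rhom_mpoly_eval: "rhom (\<lambda>P. mpoly_eval P b)"
  unfolding mpoly_eval_def using rhom_mpoly_hom[OF rhom_id] by (simp add: rhom_def)

lemma mpoly_hom_comp:
  assumes "rhom rho" "rhom phi"
  shows "rho (mpoly_hom phi a P) = mpoly_hom (rho \<circ> phi) (rho \<circ> a) P"
  unfolding mpoly_hom_def
  by (simp add: rhom_sum[OF assms(1)] rhom_mult[OF assms(1)] rhom_prod[OF assms(1)] rhom_power[OF assms(1)])



lemma keys_add_nat: "Poly_Mapping.keys (m + m' :: 'v \<Rightarrow>\<^sub>0 nat) \<subseteq> Poly_Mapping.keys m \<union> Poly_Mapping.keys m'"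
  by (rule keys_add)

lemma vars_zero [simp]: "mpoly_vars 0 = {}" by (simp add: mpoly_vars_def)
lemma vars_one [simp]: "mpoly_vars (1 :: ('v, 'k::comm_ring_1) mpoly) = {}" by (simp add: mpoly_vars_def)
lemma vars_Const: "mpoly_vars (Const c) = {}" by (simp add: mpoly_vars_def Const_def)
lemma vars_Var: "mpoly_vars (Var v :: ('v, 'k::comm_ring_1) mpoly) \<subseteq> {v}"
proof -
  have "Poly_Mapping.keys (Var v :: ('v, 'k) mpoly) = {Poly_Mapping.single v 1}"
    unfolding Var_def by (simp only: keys_single) simp
  moreover have "Poly_Mapping.keys (Poly_Mapping.single v (1::nat)) = {v}"
    by (simp only: keys_single) simp
  ultimately show ?thesis unfolding mpoly_vars_def by simp
qed
lemma vars_add: "mpoly_vars (P + Q) \<subseteq> mpoly_vars P \<union> mpoly_vars Q"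
  unfolding mpoly_vars_def using keys_add[of P Q] by auto
lemma vars_uminus: "mpoly_vars (- P :: ('v, 'k::comm_ring_1) mpoly) = mpoly_vars P"
proof -
  have "Poly_Mapping.keys (- P) = Poly_Mapping.keys P" by (auto simp: in_keys_iff)
  thus ?thesis by (simp add: mpoly_vars_def)
qed
lemma vars_diff: "mpoly_vars (P - Q :: ('v, 'k::comm_ring_1) mpoly) \<subseteq> mpoly_vars P \<union> mpoly_vars Q"
  using vars_add[of P "-Q"] vars_uminus[of Q] by simp
lemma vars_mult: "mpoly_vars (P * Q :: ('v, 'k::comm_ring_1) mpoly) \<subseteq> mpoly_vars P \<union> mpoly_vars Q"
proof
  fix v assume "v \<in> mpoly_vars (P * Q)"
  then obtain m where m: "m \<in> Poly_Mapping.keys (P * Q)" "v \<in> Poly_Mapping.keys m"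
    by (auto simp: mpoly_vars_def)
  then obtain a b where "m = a + b" "a \<in> Poly_Mapping.keys P" "b \<in> Poly_Mapping.keys Q"
    using keys_mult[of P Q] by blast
  with m(2) keys_add_nat[of a b] show "v \<in> mpoly_vars P \<union> mpoly_vars Q"
    by (auto simp: mpoly_vars_def)
qed

definition vsub :: "('v, 'k::zero) mpoly \<Rightarrow> 'v set \<Rightarrow> bool" where
  "vsub P XX \<longleftrightarrow> mpoly_vars P \<subseteq> XX"

lemma vsub_0: "vsub 0 XX" by (simp add: vsub_def)
lemma vsub_1: "vsub (1 :: ('v, 'k::comm_ring_1) mpoly) XX" by (simp add: vsub_def)
lemma vsub_Const: "vsub (Const c) XX" by (simp add: vsub_def vars_Const)
lemma vsub_Var: "v \<in> XX \<Longrightarrow> vsub (Var v :: ('v, 'k::comm_ring_1) mpoly) XX"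
  using vars_Var[of v] by (auto simp: vsub_def)
lemma vsub_add: "vsub P XX \<Longrightarrow> vsub Q XX \<Longrightarrow> vsub (P + Q) XX"
  using vars_add[of P Q] by (auto simp: vsub_def)
lemma vsub_diff: "vsub P XX \<Longrightarrow> vsub Q XX \<Longrightarrow> vsub (P - Q :: ('v, 'k::comm_ring_1) mpoly) XX"
  using vars_diff[of P Q] by (auto simp: vsub_def)
lemma vsub_mult: "vsub P XX \<Longrightarrow> vsub Q XX \<Longrightarrow> vsub (P * Q :: ('v, 'k::comm_ring_1) mpoly) XX"
  using vars_mult[of P Q] by (auto simp: vsub_def)
lemma vsub_sum: "(\<And>a. a \<in> A \<Longrightarrow> vsub (f a) XX) \<Longrightarrow> vsub (\<Sum>a\<in>A. f a :: ('v, 'k::comm_ring_1) mpoly) XX"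
  by (induction A rule: infinite_finite_induct) (auto intro: vsub_0 vsub_add)
lemma vsub_prod: "(\<And>a. a \<in> A \<Longrightarrow> vsub (f a) XX) \<Longrightarrow> vsub (\<Prod>a\<in>A. f a :: ('v, 'k::comm_ring_1) mpoly) XX"
  by (induction A rule: infinite_finite_induct) (auto intro: vsub_1 vsub_mult)

lemmas vsub_intros = vsub_0 vsub_1 vsub_Const vsub_Var vsub_add vsub_diff vsub_mult vsub_sum vsub_prod

lemma prod_indicator01:
  fixes S U :: "nat set"
  assumes "finite U"
  shows "(\<Prod>l\<in>U. (if l \<in> S then 1 else 0 :: 'a::comm_ring_1)) = (if U \<subseteq> S then 1 else 0)"
proof (cases "U \<subseteq> S")
  case True thus ?thesis by (auto intro!: prod.neutral)
next
  case False
  then obtain l where "l \<in> U" "l \<notin> S" by auto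
  thus ?thesis using assms False by (auto intro!: prod_zero)
qed

lemma ml_unique:
  fixes d :: "nat set \<Rightarrow> 'a::comm_ring_1"
  assumes fin: "finite N"
    and h: "\<And>x::nat \<Rightarrow> 'a. (\<forall>l. x l = 0 \<or> x l = 1) \<Longrightarrow> (\<Sum>S\<in>Pow N. d S * (\<Prod>l\<in>S. x l)) = 0"
  shows "\<forall>S\<in>Pow N. d S = 0"
proof (rule ccontr)
  let ?Z = "{S\<in>Pow N. d S \<noteq> 0}"
  assume "\<not> ?thesis"
  then have "?Z \<noteq> {}" by auto
  moreover have "finite ?Z" using fin by auto
  ultimately obtain S where S: "S \<in> ?Z" and min: "\<not>(\<exists>T\<in>?Z. T < S)"
    using ex_min_if_finite[of ?Z] by blast
  let ?x = "\<lambda>l. if l \<in> S then 1 else 0 :: 'a"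
  have "0 = (\<Sum>U\<in>Pow N. d U * (\<Prod>l\<in>U. ?x l))" using h[of ?x] by auto
  also have "\<dots> = (\<Sum>U\<in>Pow N. if U \<subseteq> S then d U else 0)"
    apply (rule sum.cong[OF refl])
    apply (subst prod_indicator01)
    using fin finite_subset by auto
  also have "\<dots> = (\<Sum>U\<in>Pow S. d U)"
    using S fin by (intro sum.mono_neutral_cong_right) auto
  also have "\<dots> = d S + (\<Sum>U\<in>Pow S - {S}. d U)"
    using S fin finite_subset by (subst sum.remove[of _ S]) auto
  also have "(\<Sum>U\<in>Pow S - {S}. d U) = 0"
    using S min by (intro sum.neutral) auto
  finally show False using S by simp
qed

lemma idem_power: "(x::'a::comm_ring_1) * x = x \<Longrightarrow> k \<ge> 1 \<Longrightarrow> x ^ k = x"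
proof (induction k)
  case (Suc k) thus ?case by (cases k) auto
qed simp

lemma red_lemma:
  fixes P :: "(nat, 'k::comm_ring_1) mpoly" and phi :: "'k \<Rightarrow> 'r::comm_ring_1"
  assumes hom: "rhom phi" and idem: "\<And>v. a v * a v = a v"
    and fin: "finite N" and vs: "vsub P N"
  shows "mpoly_hom phi a P =
    (\<Sum>S\<in>Pow N. phi (\<Sum>m\<in>{m \<in> Poly_Mapping.keys P. Poly_Mapping.keys m = S}. Poly_Mapping.lookup P m) * (\<Prod>l\<in>S. a l))"
proof -
  have mm: "mmon a m = (\<Prod>l\<in>Poly_Mapping.keys m. a l)" for m :: "nat \<Rightarrow>\<^sub>0 nat"
    unfolding mmon_def
    by (rule prod.cong[OF refl], rule idem_power[OF idem]) (auto simp: in_keys_iff)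
  have "(\<Sum>S\<in>Pow N. phi (\<Sum>m\<in>{m \<in> Poly_Mapping.keys P. Poly_Mapping.keys m = S}. Poly_Mapping.lookup P m) * (\<Prod>l\<in>S. a l))
      = (\<Sum>S\<in>Pow N. \<Sum>m\<in>{m \<in> Poly_Mapping.keys P. Poly_Mapping.keys m = S}. phi (Poly_Mapping.lookup P m) * (\<Prod>l\<in>Poly_Mapping.keys m. a l))"
    by (simp add: rhom_sum[OF hom] sum_distrib_right)
  also have "\<dots> = (\<Sum>m\<in>Poly_Mapping.keys P. phi (Poly_Mapping.lookup P m) * (\<Prod>l\<in>Poly_Mapping.keys m. a l))"
    by (rule sum.group) (use fin vs in \<open>auto simp: vsub_def mpoly_vars_def\<close>)
  finally show ?thesis by (simp add: mpoly_hom_mon mm)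
qed



declare add_bit_eq_xor [simp del] mult_bit_eq_and [simp del]

lemma bit_cases: "(x::bit) = 0 \<or> x = 1" by (cases "x = 0") auto
lemma bit_add_self [simp]: "(x::bit) + x = 0"
  using bit_cases[of x] by auto
lemma bit_add_self2 [simp]: "(x::bit) + (x + y) = y"
  by (metis add.assoc add_0 bit_add_self)
lemma bit_minus [simp]: "- (x::bit) = x"
  by (metis add_left_cancel bit_add_self left_minus)
lemma bit_diff: "(x::bit) - y = x + y"
  by (simp add: diff_conv_add_uminus)
lemma bit_neq: "(x::bit) \<noteq> a \<longleftrightarrow> x + a = 1"
  using bit_cases[of x] bit_cases[of a] by auto
lemma bit_neq': "(x::bit) \<noteq> a \<longleftrightarrow> x = a + 1"
  using bit_cases[of x] bit_cases[of a] by auto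
lemma bit_eq: "(x::bit) = a \<longleftrightarrow> x + a = 0"
  using bit_cases[of x] bit_cases[of a] by auto

definition cf :: "(nat \<Rightarrow> nat) \<Rightarrow> nat \<Rightarrow> (nat \<Rightarrow> bit) \<Rightarrow> (nat \<Rightarrow> bit) \<Rightarrow> nat set \<Rightarrow> bit" where
  "cf \<sigma> n cc a S = (if S \<subseteq> {1..n} then cc (r_idx \<sigma> n S) * (\<Prod>k\<in>{k\<in>{1..r_idx \<sigma> n S}. \<sigma> k \<notin> S}. a k) else 0)"

definition rel :: "(nat \<Rightarrow> nat) \<Rightarrow> nat \<Rightarrow> (nat set \<Rightarrow> bit) \<Rightarrow> bool" where
  "rel \<sigma> n c \<longleftrightarrow> c {1..n} = 1 \<and> (\<forall>S. S \<subset> {1..n} \<longrightarrow>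
     c S = c (completion \<sigma> n S) * (\<Prod>k\<in>{k \<in> {1..r_idx \<sigma> n S}. \<sigma> k \<notin> S}. c ({1..n} - {\<sigma> k})))"

definition gform :: "(nat \<Rightarrow> nat) \<Rightarrow> nat \<Rightarrow> (nat \<Rightarrow> bit) \<Rightarrow> (nat \<Rightarrow> bit) \<Rightarrow> (nat \<Rightarrow> bit) \<Rightarrow> bit" where
  "gform \<sigma> n cc a x = cc 0 + (\<Sum>r=1..n. cc r * x (\<sigma> r) * (\<Prod>j\<in>{1..<r}. x (\<sigma> j) + a j))"

definition Bv :: "(nat \<Rightarrow> bit) \<Rightarrow> (nat \<Rightarrow> bit) \<Rightarrow> nat \<Rightarrow> bit" where
  "Bv cc a k = cc 0 + (\<Sum>r\<in>{1..<k}. cc r * (a r + 1)) + cc k * a k"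

lemma r_idx_image:
  assumes p: "\<sigma> permutes {1..n}" and K: "K \<subseteq> {1..n}" "K \<noteq> {}"
  shows "r_idx \<sigma> n (\<sigma> ` K) = Max K"
proof -
  have "{k \<in> {1..n}. \<sigma> k \<in> \<sigma> ` K} = K"
    using K inj_image_mem_iff[OF permutes_inj[OF p]] by auto
  thus ?thesis using K by (simp add: r_idx_def)
qed

lemma r_idx_empty [simp]: "r_idx \<sigma> n {} = 0" by (simp add: r_idx_def)

lemma sum_Pow_split:
  fixes m :: nat and F :: "nat set \<Rightarrow> 'a::comm_monoid_add"
  shows "(\<Sum>K\<in>Pow {1..m}. F K) = F {} + (\<Sum>r=1..m. \<Sum>T\<in>Pow {1..<r}. F (insert r T))"
proof (induction m)
  case 0 thus ?case by simp
next
  case (Suc m)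
  have e: "{1..Suc m} = insert (Suc m) {1..m}" by auto
  have d: "Pow {1..m} \<inter> insert (Suc m) ` Pow {1..m} = {}" by auto
  have i: "inj_on (insert (Suc m)) (Pow {1..m})"
  proof (rule inj_onI)
    fix x y assume xy: "x \<in> Pow {1..m}" "y \<in> Pow {1..m}" "insert (Suc m) x = insert (Suc m) y"
    moreover have "Suc m \<notin> x" "Suc m \<notin> y" using xy by auto
    ultimately show "x = y" by (metis Diff_insert_absorb)
  qed
  have "(\<Sum>K\<in>Pow {1..Suc m}. F K) = (\<Sum>K\<in>Pow {1..m}. F K) + (\<Sum>K\<in>insert (Suc m) ` Pow {1..m}. F K)"
    unfolding e Pow_insert by (rule sum.union_disjoint) (use d in auto)
  also have "(\<Sum>K\<in>insert (Suc m) ` Pow {1..m}. F K) = (\<Sum>T\<in>Pow {1..<Suc m}. F (insert (Suc m) T))"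
    using sum.reindex[OF i, of F] by (simp add: atLeastLessThanSuc_atLeastAtMost)
  finally show ?case using Suc by (simp add: add.assoc)
qed

lemma ID_lemma:
  assumes p: "\<sigma> permutes {1..n}"
  shows "bool_fun n (cf \<sigma> n cc a) x = gform \<sigma> n cc a x"
proof -
  let ?N = "{1..n}"
  let ?F = "\<lambda>K. cf \<sigma> n cc a (\<sigma> ` K) * (\<Prod>k\<in>K. x (\<sigma> k))"
  have bij: "bij_betw (image \<sigma>) (Pow ?N) (Pow ?N)"
    using bij_betw_image_Pow[OF permutes_imp_bij[OF p]] .
  have "bool_fun n (cf \<sigma> n cc a) x = (\<Sum>K\<in>Pow ?N. cf \<sigma> n cc a (\<sigma> ` K) * (\<Prod>l\<in>\<sigma> ` K. x l))"
    unfolding bool_fun_def by (rule sum.reindex_bij_betw[OF bij, symmetric])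
  also have "\<dots> = (\<Sum>K\<in>Pow ?N. ?F K)"
    by (rule sum.cong[OF refl]) (simp add: prod.reindex[OF inj_on_subset[OF permutes_inj[OF p]]])
  also have "\<dots> = ?F {} + (\<Sum>r=1..n. \<Sum>T\<in>Pow {1..<r}. ?F (insert r T))"
    by (rule sum_Pow_split)
  also have "?F {} = cc 0" by (simp add: cf_def)
  also have "(\<Sum>r=1..n. \<Sum>T\<in>Pow {1..<r}. ?F (insert r T)) =
             (\<Sum>r=1..n. cc r * x (\<sigma> r) * (\<Prod>j\<in>{1..<r}. x (\<sigma> j) + a j))"
  proof (rule sum.cong[OF refl])
    fix r assume r: "r \<in> {1..n}"
    have "(\<Sum>T\<in>Pow {1..<r}. ?F (insert r T)) =
          (\<Sum>T\<in>Pow {1..<r}. cc r * x (\<sigma> r) * ((\<Prod>k\<in>T. x (\<sigma> k)) * (\<Prod>k\<in>{1..<r} - T. a k)))"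
    proof (rule sum.cong[OF refl])
      fix T assume T: "T \<in> Pow {1..<r}"
      have sub: "insert r T \<subseteq> ?N" using T r by auto
      have img: "\<sigma> ` insert r T \<subseteq> ?N" using sub permutes_image[OF p] by auto
      have fT: "finite T" using T by (meson Pow_iff finite_atLeastLessThan finite_subset)
      have mx: "Max (insert r T) = r" using T fT by (auto intro!: Max_eqI)
      have ri: "r_idx \<sigma> n (\<sigma> ` insert r T) = r"
        using r_idx_image[OF p sub] mx by simp
      have set: "{k \<in> {1..r}. \<sigma> k \<notin> \<sigma> ` insert r T} = {1..<r} - T"
        using inj_image_mem_iff[OF permutes_inj[OF p]] inj_eq[OF permutes_inj[OF p]] T by (auto simp del: image_insert)
      have "r \<notin> T" using T by auto
      moreover note fT
      ultimately have "(\<Prod>k\<in>insert r T. x (\<sigma> k)) = x (\<sigma> r) * (\<Prod>k\<in>T. x (\<sigma> k))"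
        by simp
      then show "?F (insert r T) = cc r * x (\<sigma> r) * ((\<Prod>k\<in>T. x (\<sigma> k)) * (\<Prod>k\<in>{1..<r} - T. a k))"
        unfolding cf_def using img ri set by (simp add: mult_ac)
    qed
    also have "\<dots> = cc r * x (\<sigma> r) * (\<Prod>j\<in>{1..<r}. x (\<sigma> j) + a j)"
    proof -
      have "(\<Prod>j\<in>{1..<r}. x (\<sigma> j) + a j) = (\<Sum>T\<in>Pow {1..<r}. (\<Prod>k\<in>T. x (\<sigma> k)) * (\<Prod>k\<in>{1..<r} - T. a k))"
        by (rule prod_add) simp
      then show ?thesis by (simp only: sum_distrib_left)
    qed
    finally show "(\<Sum>T\<in>Pow {1..<r}. ?F (insert r T)) = cc r * x (\<sigma> r) * (\<Prod>j\<in>{1..<r}. x (\<sigma> j) + a j)" .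
  qed
  finally show ?thesis by (simp add: gform_def)
qed



lemma gform_can:
  assumes p: "\<sigma> permutes {1..n}" and k: "k \<in> {1..n}"
    and lt: "\<forall>l\<in>{1..<k}. x (\<sigma> l) \<noteq> a l" and eq: "x (\<sigma> k) = a k"
  shows "gform \<sigma> n cc a x = Bv cc a k"
proof -
  let ?g = "\<lambda>r. cc r * x (\<sigma> r) * (\<Prod>j\<in>{1..<r}. x (\<sigma> j) + a j)"
  have prod1: "(\<Prod>j\<in>{1..<r}. x (\<sigma> j) + a j) = 1" if "r \<le> k" for r
    using lt that by (intro prod.neutral) (auto simp: bit_neq)
  have prod0: "(\<Prod>j\<in>{1..<r}. x (\<sigma> j) + a j) = 0" if "k < r" for r
    using that k eq by (intro prod_zero) (auto intro!: bexI[of _ k])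
  have "(\<Sum>r=1..n. ?g r) = (\<Sum>r=1..k. ?g r)"
    using k prod0 by (intro sum.mono_neutral_right) auto
  also have "{1..k} = insert k {1..<k}" using k by auto
  also have "(\<Sum>r\<in>insert k {1..<k}. ?g r) = ?g k + (\<Sum>r\<in>{1..<k}. ?g r)" by simp
  also have "?g k = cc k * a k" using eq prod1[of k] by simp
  also have "(\<Sum>r\<in>{1..<k}. ?g r) = (\<Sum>r\<in>{1..<k}. cc r * (a r + 1))"
    using lt prod1 by (intro sum.cong[OF refl]) (auto simp: bit_neq')
  finally show ?thesis by (simp add: gform_def Bv_def add_ac)
qed

lemma gform_none:
  assumes n: "n \<ge> 1" and ccn: "cc n = 1"
    and ne: "\<forall>k\<in>{1..n}. x (\<sigma> k) \<noteq> a k"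
  shows "gform \<sigma> n cc a x = 1 + Bv cc a n"
proof -
  let ?g = "\<lambda>r. cc r * x (\<sigma> r) * (\<Prod>j\<in>{1..<r}. x (\<sigma> j) + a j)"
  have prod1: "(\<Prod>j\<in>{1..<r}. x (\<sigma> j) + a j) = 1" if "r \<le> n" for r
    using ne that by (intro prod.neutral) (auto simp: bit_neq)
  have "{1..n} = insert n {1..<n}" using n by auto
  then have "(\<Sum>r=1..n. ?g r) = ?g n + (\<Sum>r\<in>{1..<n}. ?g r)" by simp
  also have "?g n = a n + 1" using ne n prod1[of n] ccn by (simp add: bit_neq')
  also have "(\<Sum>r\<in>{1..<n}. ?g r) = (\<Sum>r\<in>{1..<n}. cc r * (a r + 1))"
    using ne prod1 by (intro sum.cong[OF refl]) (auto simp: bit_neq')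
  finally show ?thesis using ccn by (simp add: gform_def Bv_def add_ac)
qed

lemma bit_ne_1plus: "(a::bit) \<noteq> 1 + a"
  using bit_cases[of a] by auto

lemma ncf_dep:
  assumes p: "\<sigma> permutes {1..n}" and n: "n \<ge> 1"
    and H: "\<forall>x. (\<forall>k\<in>{1..n}. (\<forall>l\<in>{1..<k}. x (\<sigma> l) \<noteq> a l) \<and> x (\<sigma> k) = a k \<longrightarrow> h x = b k)
           \<and> ((\<forall>k\<in>{1..n}. x (\<sigma> k) \<noteq> a k) \<longrightarrow> h x = 1 + b n)"
  shows "depends_on_all n h"
  unfolding depends_on_all_def
proof
  fix e assume e: "e \<in> {1..n}"
  define k where "k = inv_into UNIV \<sigma> e"
  have sk: "\<sigma> k = e" unfolding k_def using permutes_inverses(1)[OF p] .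
  have kN: "k \<in> {1..n}" using e sk permutes_in_image[OF p, of k] by simp
  have inv: "inv_into UNIV \<sigma> (\<sigma> l) = l" for l using permutes_inverses(2)[OF p] .
  have injs: "\<sigma> l = \<sigma> k \<longleftrightarrow> l = k" for l k using inj_eq[OF permutes_inj[OF p]] .
  show "\<exists>x. h x \<noteq> h (x(e := 1 + x e))"
  proof (cases "b k = 1 + b n")
    case False
    define x where "x = (\<lambda>v. if v = \<sigma> k then a k else a (inv_into UNIV \<sigma> v) + 1)"
    have xs: "x (\<sigma> l) = (if l = k then a k else a l + 1)" for l
      unfolding x_def using injs inv by auto
    have "h x = b k" using H kN xs by (auto simp: bit_neq')
    moreover have "h (x(e := 1 + x e)) = 1 + b n"
    proof -
      have "\<forall>l\<in>{1..n}. (x(e := 1 + x e)) (\<sigma> l) \<noteq> a l"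
        using xs sk injs by (auto simp: bit_neq' add_ac)
      thus ?thesis using H by blast
    qed
    ultimately show ?thesis using False by (intro exI[of _ x]) simp
  next
    case True
    then have kn: "k \<noteq> n" using bit_ne_1plus by auto
    then have kn': "k < n" using kN by auto
    define x where "x = (\<lambda>v. if v = \<sigma> k then a k else if v = \<sigma> n then a n else a (inv_into UNIV \<sigma> v) + 1)"
    have xs: "x (\<sigma> l) = (if l = k then a k else if l = n then a n else a l + 1)" for l
      unfolding x_def using injs inv by auto
    have "h x = b k" using H kN xs kn' by (auto simp: bit_neq')
    moreover have "h (x(e := 1 + x e)) = b n"
    proof -
      have "\<forall>l\<in>{1..<n}. (x(e := 1 + x e)) (\<sigma> l) \<noteq> a l"
        using xs sk injs by (auto simp: bit_neq' add_ac)
      moreover have "(x(e := 1 + x e)) (\<sigma> n) = a n" using xs sk injs kn by auto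
      ultimately show ?thesis using H n by auto
    qed
    ultimately show ?thesis using True bit_ne_1plus[of "b n"] by (intro exI[of _ x]) simp
  qed
qed



lemma Max_1n: "n \<ge> 1 \<Longrightarrow> Max {1..n} = (n::nat)" by (intro Max_eqI) auto

lemma R1:
  assumes p: "\<sigma> permutes {1..n}" and n: "n \<ge> 1"
    and sup: "\<forall>S. S \<notin> Pow {1..n} \<longrightarrow> c S = 0" and rl: "rel \<sigma> n c"
  shows "c = cf \<sigma> n (\<lambda>r. c (\<sigma> ` {1..r})) (\<lambda>k. c ({1..n} - {\<sigma> k}))"
proof
  fix S
  show "c S = cf \<sigma> n (\<lambda>r. c (\<sigma> ` {1..r})) (\<lambda>k. c ({1..n} - {\<sigma> k})) S"
  proof (cases "S \<subseteq> {1..n}")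
    case False thus ?thesis using sup by (simp add: cf_def)
  next
    case True
    show ?thesis
    proof (cases "S = {1..n}")
      case True
      have im: "\<sigma> ` {1..n} = {1..n}" using permutes_image[OF p] .
      have "r_idx \<sigma> n {1..n} = n"
        using r_idx_image[OF p, of "{1..n}"] n im Max_1n[OF n] by simp
      moreover have e: "{k \<in> {1..n}. \<sigma> k \<notin> {1..n}} = {}" using permutes_in_image[OF p] by auto
      ultimately have "cf \<sigma> n (\<lambda>r. c (\<sigma> ` {1..r})) (\<lambda>k. c ({1..n} - {\<sigma> k})) {1..n} = c (\<sigma> ` {1..n}) * 1"
        unfolding cf_def by (simp only: subset_refl if_True prod.empty)
      then show ?thesis using True im by simp
    next
      case False
      then have "S \<subset> {1..n}" using \<open>S \<subseteq> {1..n}\<close> by auto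
      then show ?thesis using rl \<open>S \<subseteq> {1..n}\<close> by (simp add: rel_def cf_def completion_def)
    qed
  qed
qed

lemma R2:
  assumes p: "\<sigma> permutes {1..n}" and n: "n \<ge> 1" and ccn: "cc n = 1"
  shows "rel \<sigma> n (cf \<sigma> n cc a)"
proof -
  let ?N = "{1..n}"
  have im: "\<sigma> ` ?N = ?N" using permutes_image[OF p] .
  have injs: "\<sigma> l = \<sigma> k \<longleftrightarrow> l = k" for l k using inj_eq[OF permutes_inj[OF p]] .
  have inN: "\<sigma> k \<in> ?N \<longleftrightarrow> k \<in> ?N" for k using permutes_in_image[OF p] .
  have rN: "r_idx \<sigma> n ?N = n"
    using r_idx_image[OF p, of ?N] n im Max_1n[OF n] by simp
  have top: "cf \<sigma> n cc a ?N = 1"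
  proof -
    have e: "{k \<in> {1..n}. \<sigma> k \<notin> {1..n}} = {}" using inN by auto
    have "cf \<sigma> n cc a ?N = cc n * 1"
      unfolding cf_def by (simp only: subset_refl if_True rN e prod.empty)
    thus ?thesis using ccn by simp
  qed
  have ak: "cf \<sigma> n cc a (?N - {\<sigma> k}) = a k" if k: "k \<in> ?N" "k < n" for k
  proof -
    have e: "?N - {\<sigma> k} = \<sigma> ` (?N - {k})"
      using im injs by (auto simp: image_set_diff[OF permutes_inj[OF p]])
    have "Max (?N - {k}) = n" using k n by (intro Max_eqI) auto
    moreover have "n \<in> ?N - {k}" using k n by auto
    then have "?N - {k} \<noteq> {}" by blast
    ultimately have r: "r_idx \<sigma> n (?N - {\<sigma> k}) = n"
      unfolding e using r_idx_image[OF p, of "?N - {k}"] by auto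
    have s: "{k' \<in> {1..n}. \<sigma> k' \<notin> ?N - {\<sigma> k}} = {k}"
      using k inN injs by auto
    show ?thesis using r s ccn by (simp add: cf_def)
  qed
  have "cf \<sigma> n cc a S = cf \<sigma> n cc a (completion \<sigma> n S) *
          (\<Prod>k\<in>{k \<in> {1..r_idx \<sigma> n S}. \<sigma> k \<notin> S}. cf \<sigma> n cc a (?N - {\<sigma> k}))"
    if S: "S \<subset> ?N" for S
  proof (cases "S = {}")
    case True thus ?thesis by (simp add: cf_def completion_def)
  next
    case False
    let ?K = "{k \<in> ?N. \<sigma> k \<in> S}"
    obtain s where s: "s \<in> S" using False by auto
    have "inv_into UNIV \<sigma> s \<in> ?K"
      using s S permutes_inverses(1)[OF p, of s] inN[of "inv_into UNIV \<sigma> s"] by auto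
    then have Kne: "?K \<noteq> {}" by auto
    define r where "r = r_idx \<sigma> n S"
    have rK: "r = Max ?K" using False by (simp add: r_def r_idx_def)
    have rin: "r \<in> ?K" unfolding rK using Kne by (intro Max_in) auto
    have rmax: "k \<le> r" if "k \<in> ?K" for k unfolding rK using that by (intro Max_ge) auto
    have r1: "{1..r} \<subseteq> ?N" "{1..r} \<noteq> {}" using rin by auto
    have "Max {1..r} = r" using rin by (intro Max_eqI) auto
    then have rc: "r_idx \<sigma> n (\<sigma> ` {1..r}) = r" using r_idx_image[OF p r1] by simp
    have e0: "{k \<in> {1..r}. \<sigma> k \<notin> \<sigma> ` {1..r}} = {}" by auto
    have csub: "\<sigma> ` {1..r} \<subseteq> ?N" using r1 im by auto
    have comp: "cf \<sigma> n cc a (completion \<sigma> n S) = cc r"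
      unfolding completion_def r_def[symmetric] cf_def by (simp only: rc e0 csub if_True prod.empty mult_1_right)
    have pr: "(\<Prod>k\<in>{k \<in> {1..r}. \<sigma> k \<notin> S}. cf \<sigma> n cc a (?N - {\<sigma> k})) = (\<Prod>k\<in>{k \<in> {1..r}. \<sigma> k \<notin> S}. a k)"
    proof (rule prod.cong[OF refl])
      fix k assume k: "k \<in> {k \<in> {1..r}. \<sigma> k \<notin> S}"
      then have "k \<noteq> r" using rin by auto
      then have "k < n" "k \<in> ?N" using k rin by auto
      thus "cf \<sigma> n cc a (?N - {\<sigma> k}) = a k" using ak by blast
    qed
    show ?thesis using S comp pr by (simp add: cf_def r_def)
  qed
  thus ?thesis using top by (simp add: rel_def)
qed

function ccf :: "nat \<Rightarrow> (nat \<Rightarrow> bit) \<Rightarrow> (nat \<Rightarrow> bit) \<Rightarrow> nat \<Rightarrow> bit" where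
  "ccf n A B k = (if n \<le> k then 1 else B (k + 1) + (if k = 0 then 0 else B k) + ccf n A B (k + 1) * A (k + 1))"
  by auto
termination by (relation "measure (\<lambda>(n, A, B, k). n - k)") auto

declare ccf.simps [simp del]

lemma ccf_top: "n \<le> k \<Longrightarrow> ccf n A B k = 1" by (simp add: ccf.simps)
lemma ccf_step: "k < n \<Longrightarrow> ccf n A B k = B (k + 1) + (if k = 0 then 0 else B k) + ccf n A B (k + 1) * A (k + 1)"
  by (subst ccf.simps) simp

lemma solve:
  assumes n: "n \<ge> 1"
  shows "\<forall>k. 1 \<le> k \<longrightarrow> k \<le> n \<longrightarrow> Bv (ccf n A B) A k = B k"
proof (intro allI impI)
  fix k :: nat assume k: "1 \<le> k" "k \<le> n"
  let ?c = "ccf n A B"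
  show "Bv ?c A k = B k" using k
  proof (induction k)
    case 0 thus ?case by simp
  next
    case (Suc k)
    show ?case
    proof (cases k)
      case 0
      have "?c 0 = B 1 + ?c 1 * A 1" using ccf_step[of 0 n A B] n by simp
      thus ?thesis using 0 by (simp add: Bv_def add.assoc)
    next
      case (Suc k')
      have IH: "Bv ?c A k = B k" using Suc.IH Suc.prems Suc by simp
      have st: "?c k = B (k + 1) + B k + ?c (k + 1) * A (k + 1)"
        using ccf_step[of k n A B] Suc.prems Suc by simp
      have "{1..<Suc k} = insert k {1..<k}" using Suc by auto
      then have "Bv ?c A (Suc k) = ?c 0 + (\<Sum>r\<in>{1..<k}. ?c r * (A r + 1)) + ?c k * (A k + 1) + ?c (Suc k) * A (Suc k)"
        by (simp add: Bv_def add_ac)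
      also have "\<dots> = Bv ?c A k + ?c k + ?c (Suc k) * A (Suc k)"
        by (simp add: Bv_def algebra_simps)
      also have "\<dots> = B (Suc k)" using IH st by (simp add: add_ac)
      finally show ?thesis .
    qed
  qed
qed

lemma claim2:
  assumes n: "n \<ge> 1" and sup: "\<forall>S. S \<notin> Pow {1..n} \<longrightarrow> c S = 0"
  shows "(\<exists>\<sigma>. \<sigma> permutes {1..n} \<and> rel \<sigma> n c) \<longleftrightarrow> nested_canalyzing n (bool_fun n c)"
proof
  assume "\<exists>\<sigma>. \<sigma> permutes {1..n} \<and> rel \<sigma> n c"
  then obtain \<sigma> where p: "\<sigma> permutes {1..n}" and rl: "rel \<sigma> n c" by auto
  define cc where "cc = (\<lambda>r. c (\<sigma> ` {1..r}))"
  define a where "a = (\<lambda>k. c ({1..n} - {\<sigma> k}))"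
  have ceq: "c = cf \<sigma> n cc a" unfolding cc_def a_def by (rule R1[OF p n sup rl])
  have ccn: "cc n = 1" using rl permutes_image[OF p] by (simp add: cc_def rel_def)
  have bf: "bool_fun n c x = gform \<sigma> n cc a x" for x
    by (subst ceq) (rule ID_lemma[OF p])
  have H: "\<forall>x. (\<forall>k\<in>{1..n}. (\<forall>l\<in>{1..<k}. x (\<sigma> l) \<noteq> a l) \<and> x (\<sigma> k) = a k \<longrightarrow> bool_fun n c x = Bv cc a k)
           \<and> ((\<forall>k\<in>{1..n}. x (\<sigma> k) \<noteq> a k) \<longrightarrow> bool_fun n c x = 1 + Bv cc a n)"
    using gform_can[OF p] gform_none[of n cc, OF n ccn] bf by auto
  show "nested_canalyzing n (bool_fun n c)"
    unfolding nested_canalyzing_def using ncf_dep[OF p n H] p H by blast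
next
  assume "nested_canalyzing n (bool_fun n c)"
  then obtain \<sigma> A B where p: "\<sigma> permutes {1..n}"
    and H: "\<forall>x. (\<forall>k\<in>{1..n}. (\<forall>l\<in>{1..<k}. x (\<sigma> l) \<noteq> A l) \<and> x (\<sigma> k) = A k \<longrightarrow> bool_fun n c x = B k)
           \<and> ((\<forall>k\<in>{1..n}. x (\<sigma> k) \<noteq> A k) \<longrightarrow> bool_fun n c x = 1 + B n)"
    unfolding nested_canalyzing_def by blast
  define cc where "cc = ccf n A B"
  have ccn: "cc n = 1" unfolding cc_def by (rule ccf_top) simp
  have sol: "\<And>k. k \<in> {1..n} \<Longrightarrow> Bv cc A k = B k" using solve[OF n, of A B] by (auto simp: cc_def)
  let ?c' = "cf \<sigma> n cc A"
  have feq: "bool_fun n c x = bool_fun n ?c' x" for x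
  proof (cases "\<exists>k\<in>{1..n}. x (\<sigma> k) = A k")
    case True
    define k where "k = (LEAST k. k \<in> {1..n} \<and> x (\<sigma> k) = A k)"
    have "k \<in> {1..n} \<and> x (\<sigma> k) = A k"
      unfolding k_def by (rule LeastI_ex) (use True in blast)
    then have k: "k \<in> {1..n}" "x (\<sigma> k) = A k" by auto
    have lt: "\<forall>l\<in>{1..<k}. x (\<sigma> l) \<noteq> A l"
    proof
      fix l assume l: "l \<in> {1..<k}"
      then have "l \<in> {1..n}" using k by auto
      moreover have "\<not> (l \<in> {1..n} \<and> x (\<sigma> l) = A l)"
        using not_less_Least[of l "\<lambda>k. k \<in> {1..n} \<and> x (\<sigma> k) = A k"] l unfolding k_def by auto
      ultimately show "x (\<sigma> l) \<noteq> A l" by auto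
    qed
    have "bool_fun n c x = B k" using H k lt by blast
    moreover have "bool_fun n ?c' x = B k"
      using ID_lemma[OF p] gform_can[OF p k(1) lt k(2)] sol[OF k(1)] by simp
    ultimately show ?thesis by simp
  next
    case False
    then have "bool_fun n c x = 1 + B n" using H by blast
    moreover have "bool_fun n ?c' x = 1 + B n"
      using ID_lemma[OF p] gform_none[of n cc, OF n ccn] False sol[of n] n by simp
    ultimately show ?thesis by simp
  qed
  have "\<forall>S\<in>Pow {1..n}. c S - ?c' S = 0"
  proof (rule ml_unique)
    fix x :: "nat \<Rightarrow> bit"
    have "(\<Sum>S\<in>Pow {1..n}. (c S - ?c' S) * (\<Prod>l\<in>S. x l)) = bool_fun n c x - bool_fun n ?c' x"
      unfolding bool_fun_def by (simp add: left_diff_distrib sum_subtractf distrib_right sum.distrib)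
    thus "(\<Sum>S\<in>Pow {1..n}. (c S - ?c' S) * (\<Prod>l\<in>S. x l)) = 0" using feq by simp
  qed simp
  then have "\<forall>S\<in>Pow {1..n}. c S = ?c' S" by (simp only: right_minus_eq)
  then have "c = ?c'" using sup by (auto simp: cf_def fun_eq_iff)
  then have "rel \<sigma> n c" using R2[of \<sigma> n cc, OF p n ccn] by simp
  thus "\<exists>\<sigma>. \<sigma> permutes {1..n} \<and> rel \<sigma> n c" using p by blast
qed



lemma ideal_span_vanish:
  assumes f: "rhom f" and G: "\<forall>g\<in>G. f g = 0" and P: "P \<in> ideal_span R G"
  shows "f P = 0"
proof -
  obtain F q where P: "P = (\<Sum>g\<in>F. q g * g)" and FG: "F \<subseteq> G"
    using P unfolding ideal_span_def by blast
  show ?thesis unfolding P rhom_sum[OF f] rhom_mult[OF f] using FG G by (intro sum.neutral) auto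
qed

definition gens :: "nat \<Rightarrow> (nat \<Rightarrow> nat) \<Rightarrow> (nat set, F2bar) mpoly set" where
  "gens n \<sigma> = ({Var {1..n} - 1} \<union>
      {Var S - Var (completion \<sigma> n S) *
          (\<Prod>k\<in>{k \<in> {1..r_idx \<sigma> n S}. \<sigma> k \<notin> S}. Var ({1..n} - {\<sigma> k})) | S. S \<subset> {1..n}})"

lemma I_sigma_gens: "I_sigma n \<sigma> = ideal_span (PolyRing n) (gens n \<sigma>)"
  by (simp add: I_sigma_def gens_def)

lemma eval_Var: "mpoly_eval (Var v) b = b v"
  unfolding mpoly_eval_def by (rule mpoly_hom_Var[OF rhom_id])

lemma eval_Const: "mpoly_eval (Const u) b = u"
  unfolding mpoly_eval_def using mpoly_hom_Const[OF rhom_id] by simp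

lemma emb_inj: "emb x = emb y \<longleftrightarrow> x = y" by (simp add: emb_to_ac)

lemma PolyRing_vsub: "P \<in> PolyRing n \<longleftrightarrow> vsub P (Pow {1..n})"
  by (simp add: PolyRing_def vsub_def)

lemma r_idx_le:
  assumes p: "\<sigma> permutes {1..n}" and S: "S \<subseteq> {1..n}"
  shows "r_idx \<sigma> n S \<le> n"
proof (cases "S = {}")
  case False
  then obtain s where s: "s \<in> S" by auto
  have "inv_into UNIV \<sigma> s \<in> {k \<in> {1..n}. \<sigma> k \<in> S}"
    using s S permutes_inverses(1)[OF p, of s] permutes_in_image[OF p, of "inv_into UNIV \<sigma> s"] by auto
  then have "{k \<in> {1..n}. \<sigma> k \<in> S} \<noteq> {}" by auto
  then show ?thesis using False by (auto simp: r_idx_def)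
qed (simp add: r_idx_def)

lemma gens_PolyRing:
  assumes p: "\<sigma> permutes {1..n}"
  shows "gens n \<sigma> \<subseteq> PolyRing n"
proof
  fix g assume "g \<in> gens n \<sigma>"
  then consider "g = Var {1..n} - 1"
    | S where "S \<subset> {1..n}" "g = Var S - Var (completion \<sigma> n S) *
          (\<Prod>k\<in>{k \<in> {1..r_idx \<sigma> n S}. \<sigma> k \<notin> S}. Var ({1..n} - {\<sigma> k}))"
    unfolding gens_def by blast
  then show "g \<in> PolyRing n"
  proof cases
    case 1 thus ?thesis unfolding PolyRing_vsub by (auto intro!: vsub_intros)
  next
    case 2
    have "completion \<sigma> n S \<subseteq> {1..n}"
      using r_idx_le[OF p, of S] 2(1) permutes_in_image[OF p] by (auto simp: completion_def)
    then show ?thesis using 2 unfolding PolyRing_vsub by (auto intro!: vsub_intros)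
  qed
qed

lemma gens_vanish:
  "(\<forall>g\<in>gens n \<sigma>. mpoly_eval g (emb \<circ> c) = 0) \<longleftrightarrow> rel \<sigma> n c"
proof -
  let ?ev = "\<lambda>P. mpoly_eval P (emb \<circ> c)"
  have hom: "rhom ?ev" by (rule rhom_mpoly_eval)
  have e1: "?ev (Var {1..n} - 1) = 0 \<longleftrightarrow> c {1..n} = 1"
    using emb_inj[of "c {1..n}" 1] rhom_1[OF rhom_emb]
    by (simp add: rhom_diff[OF hom] rhom_1[OF hom] eval_Var)
  have e2: "?ev (Var S - Var C * (\<Prod>k\<in>K. Var (Y k))) = 0 \<longleftrightarrow> c S = c C * (\<Prod>k\<in>K. c (Y k))"
    for S C K Y
  proof -
    have "?ev (Var S - Var C * (\<Prod>k\<in>K. Var (Y k))) = emb (c S - c C * (\<Prod>k\<in>K. c (Y k)))"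
      by (simp add: rhom_diff[OF hom] rhom_mult[OF hom] rhom_prod[OF hom] eval_Var
          rhom_diff[OF rhom_emb] rhom_mult[OF rhom_emb] rhom_prod[OF rhom_emb] del: minus_bit_def)
    also have "\<dots> = 0 \<longleftrightarrow> c S - c C * (\<Prod>k\<in>K. c (Y k)) = 0" by (simp only: emb_to_ac to_ac_eq_0_iff)
    finally show ?thesis by (simp only: right_minus_eq)
  qed
  have "(\<forall>g\<in>gens n \<sigma>. ?ev g = 0) \<longleftrightarrow> ?ev (Var {1..n} - 1) = 0 \<and>
     (\<forall>S. S \<subset> {1..n} \<longrightarrow> ?ev (Var S - Var (completion \<sigma> n S) *
          (\<Prod>k\<in>{k \<in> {1..r_idx \<sigma> n S}. \<sigma> k \<notin> S}. Var ({1..n} - {\<sigma> k}))) = 0)"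
    unfolding gens_def by blast
  also have "\<dots> \<longleftrightarrow> rel \<sigma> n c" unfolding e1 e2 rel_def ..
  finally show ?thesis .
qed

lemma claim1:
  assumes n: "n \<ge> 1"
  shows "(\<forall>P\<in>I_Vncf n. mpoly_eval P (emb \<circ> c) = 0) \<longleftrightarrow> (\<exists>\<sigma>. \<sigma> permutes {1..n} \<and> rel \<sigma> n c)"
proof
  let ?ev = "\<lambda>P. mpoly_eval P (emb \<circ> c)"
  assume "\<exists>\<sigma>. \<sigma> permutes {1..n} \<and> rel \<sigma> n c"
  then obtain \<sigma> where p: "\<sigma> permutes {1..n}" and rl: "rel \<sigma> n c" by auto
  show "\<forall>P\<in>I_Vncf n. ?ev P = 0"
  proof
    fix P assume "P \<in> I_Vncf n"
    then have "P \<in> I_sigma n \<sigma>" using p unfolding I_Vncf_def by blast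
    then show "?ev P = 0" unfolding I_sigma_gens
      by (rule ideal_span_vanish[OF rhom_mpoly_eval, rotated]) (use rl gens_vanish in blast)
  qed
next
  let ?ev = "\<lambda>P. mpoly_eval P (emb \<circ> c)"
  let ?Ps = "{\<sigma>. \<sigma> permutes {1..n}}"
  assume V: "\<forall>P\<in>I_Vncf n. ?ev P = 0"
  show "\<exists>\<sigma>. \<sigma> permutes {1..n} \<and> rel \<sigma> n c"
  proof (rule ccontr)
    assume "\<not> ?thesis"
    then have "\<forall>\<sigma>\<in>?Ps. \<exists>g\<in>gens n \<sigma>. ?ev g \<noteq> 0" using gens_vanish by blast
    then obtain G where G: "\<forall>\<sigma>\<in>?Ps. G \<sigma> \<in> gens n \<sigma> \<and> ?ev (G \<sigma>) \<noteq> 0" by metis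
    have fin: "finite ?Ps" by (rule finite_permutations) simp
    let ?P = "\<Prod>\<sigma>\<in>?Ps. G \<sigma>"
    have "?P \<in> I_Vncf n" unfolding I_Vncf_def
    proof
      fix \<tau> assume t: "\<tau> \<in> ?Ps"
      let ?q = "\<Prod>\<sigma>\<in>?Ps - {\<tau>}. G \<sigma>"
      have qR: "?q \<in> PolyRing n" unfolding PolyRing_vsub
      proof (rule vsub_prod)
        fix \<sigma> assume "\<sigma> \<in> ?Ps - {\<tau>}"
        then have "G \<sigma> \<in> PolyRing n" using G gens_PolyRing by blast
        then show "vsub (G \<sigma>) (Pow {1..n})" by (simp add: PolyRing_vsub)
      qed
      have "?P = (\<Sum>g\<in>{G \<tau>}. (\<lambda>_. ?q) g * g)"
        using prod.remove[OF fin t, of G] by (simp add: mult.commute)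
      moreover have "{G \<tau>} \<subseteq> gens n \<tau>" using G t by auto
      ultimately have H: "?P = (\<Sum>g\<in>{G \<tau>}. (\<lambda>_. ?q) g * g) \<and> finite {G \<tau>} \<and> {G \<tau>} \<subseteq> gens n \<tau> \<and> (\<forall>g\<in>{G \<tau>}. (\<lambda>_. ?q) g \<in> PolyRing n)"
        using qR by simp
      show "?P \<in> I_sigma n \<tau>" unfolding I_sigma_gens ideal_span_def mem_Collect_eq
        apply (rule exI[of _ "{G \<tau>}"])
        apply (rule exI[of _ "\<lambda>_. ?q"])
        by (rule H)
    qed
    then have "?ev ?P = 0" using V by blast
    moreover have "?ev ?P = (\<Prod>\<sigma>\<in>?Ps. ?ev (G \<sigma>))" by (rule rhom_prod[OF rhom_mpoly_eval])
    moreover have "\<dots> \<noteq> 0" using G fin by (simp add: prod_zero_iff)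
    ultimately show False by simp
  qed
qed



declare minus_bit_def [simp del]

definition dlt :: "nat \<Rightarrow> (nat \<Rightarrow> bit) \<Rightarrow> (nat \<Rightarrow> bit) \<Rightarrow> bit" where
  "dlt n sk x = (\<Prod>e\<in>{1..n}. 1 - (x e - sk e))"

definition Fb :: "nat \<Rightarrow> nat \<Rightarrow> (nat \<Rightarrow> nat \<Rightarrow> bit) \<Rightarrow> (nat \<Rightarrow> nat \<Rightarrow> bit) \<Rightarrow> nat \<Rightarrow> (nat \<Rightarrow> bit) \<Rightarrow> bit" where
  "Fb n r s t i x = (\<Sum>j\<in>{1..r}. t j i * dlt n (s j) x)"

definition Pb :: "nat \<Rightarrow> nat \<Rightarrow> (nat \<Rightarrow> nat \<Rightarrow> bit) \<Rightarrow> (nat \<Rightarrow> bit) \<Rightarrow> bit" where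
  "Pb n r s x = (\<Prod>j\<in>{1..r}. 1 - dlt n (s j) x)"

lemma bit_factor: "1 - ((u::bit) - v) = (if u = v then 1 else 0)"
  using bit_cases[of u] bit_cases[of v] by (auto simp: minus_bit_def)

lemma dlt_val: "dlt n sk x = (if \<forall>e\<in>{1..n}. x e = sk e then 1 else 0)"
proof (cases "\<forall>e\<in>{1..n}. x e = sk e")
  case True thus ?thesis unfolding dlt_def bit_factor by (auto intro!: prod.neutral)
next
  case False
  then obtain e where "e \<in> {1..n}" "x e \<noteq> sk e" by auto
  thus ?thesis unfolding dlt_def bit_factor using False by (auto intro!: prod_zero bexI[of _ e])
qed

lemma bf_local:
  assumes "\<forall>e\<in>{1..n}. x e = y e"
  shows "bool_fun n c x = bool_fun n c y"
  unfolding bool_fun_def using assms by (intro sum.cong[OF refl] arg_cong2[where f="(*)"] refl prod.cong) auto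

lemma data_vals:
  assumes D: "\<forall>j\<in>{1..r}. \<forall>k\<in>{1..r}. j \<noteq> k \<longrightarrow> (\<exists>e\<in>{1..n}. s j e \<noteq> s k e)"
    and j: "j \<in> {1..r}" and x: "\<forall>e\<in>{1..n}. x e = s j e"
  shows "Fb n r s t i x = t j i" "Pb n r s x = 0"
proof -
  have d: "dlt n (s k) x = (if k = j then 1 else 0)" if k: "k \<in> {1..r}" for k
  proof (cases "k = j")
    case True thus ?thesis using x by (simp add: dlt_val)
  next
    case False
    then obtain e where "e \<in> {1..n}" "s j e \<noteq> s k e" using D j k by metis
    thus ?thesis using x False by (auto simp: dlt_val)
  qed
  have "Fb n r s t i x = (\<Sum>k\<in>{1..r}. if k = j then t k i else 0)"
    unfolding Fb_def by (rule sum.cong[OF refl]) (simp add: d)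
  also have "\<dots> = t j i" using j by simp
  finally show "Fb n r s t i x = t j i" .
  show "Pb n r s x = 0" unfolding Pb_def using j d[OF j]
    by (intro prod_zero) (auto intro!: bexI[of _ j] simp: minus_bit_def)
qed

lemma data_none:
  assumes x: "\<forall>j\<in>{1..r}. \<exists>e\<in>{1..n}. x e \<noteq> s j e"
  shows "Fb n r s t i x = 0" "Pb n r s x = 1"
proof -
  have d: "dlt n (s k) x = 0" if k: "k \<in> {1..r}" for k using x k by (auto simp: dlt_val)
  show "Fb n r s t i x = 0" unfolding Fb_def using d by (intro sum.neutral) auto
  show "Pb n r s x = 1" unfolding Pb_def using d by (intro prod.neutral) (auto simp: minus_bit_def)
qed

lemma fits_eq:
  assumes D: "\<forall>j\<in>{1..r}. \<forall>k\<in>{1..r}. j \<noteq> k \<longrightarrow> (\<exists>e\<in>{1..n}. s j e \<noteq> s k e)"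
    and fit: "\<forall>j\<in>{1..r}. bool_fun n c (s j) = t j i"
  shows "Fb n r s t i x + bool_fun n c x * Pb n r s x = bool_fun n c x"
proof (cases "\<exists>j\<in>{1..r}. \<forall>e\<in>{1..n}. x e = s j e")
  case True
  then obtain j where j: "j \<in> {1..r}" "\<forall>e\<in>{1..n}. x e = s j e" by blast
  have "bool_fun n c x = bool_fun n c (s j)" by (rule bf_local) (use j in auto)
  thus ?thesis using data_vals(1)[OF D j, of t i] data_vals(2)[OF D j] fit j by simp
next
  case False
  thus ?thesis using data_none(1)[of r n x s t i] data_none(2)[of r n x s] by auto
qed

lemma vsub_XC: "vsub (XC b) Y" unfolding XC_def by (rule vsub_Const)

lemma vsub_delta: "vsub (delta n sk) {1..n}"
  unfolding delta_def by (intro vsub_prod vsub_diff vsub_1 vsub_Var vsub_XC) auto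

lemma vsub_P0: "vsub (f_data n r s t i + B_poly n * p_data n r s) {1..n}"
  unfolding f_data_def B_poly_def p_data_def
  by (intro vsub_add vsub_mult vsub_sum vsub_prod vsub_diff vsub_1 vsub_XC vsub_delta vsub_Const vsub_Var) auto

lemma W_unfold: "W n r s t i S = (\<Sum>m\<in>{m \<in> Poly_Mapping.keys (f_data n r s t i + B_poly n * p_data n r s).
     Poly_Mapping.keys m = S}. Poly_Mapping.lookup (f_data n r s t i + B_poly n * p_data n r s) m)"
  by (simp add: W_def Let_def)

lemma KC:
  fixes psi :: "(nat set, F2bar) mpoly \<Rightarrow> 'r::comm_ring_1" and rho :: "bit \<Rightarrow> 'r"
  assumes psi: "rhom psi" and rho: "rhom rho" and pr: "\<And>b. psi (Const (emb b)) = rho b"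
  shows "mpoly_hom psi (rho \<circ> x) (f_data n r s t i) = rho (Fb n r s t i x)"
    "mpoly_hom psi (rho \<circ> x) (p_data n r s) = rho (Pb n r s x)"
    "mpoly_hom psi (rho \<circ> x) (B_poly n) = (\<Sum>H\<in>Pow {1..n}. psi (Var H) * rho (\<Prod>l\<in>H. x l))"
proof -
  let ?H = "mpoly_hom psi (rho \<circ> x)"
  have hH: "rhom ?H" by (rule rhom_mpoly_hom[OF psi])
  have xc: "?H (XC b) = rho b" for b unfolding XC_def by (simp add: mpoly_hom_Const[OF psi] pr)
  have dl: "?H (delta n sk) = rho (dlt n sk x)" for sk
    unfolding delta_def dlt_def
    by (simp add: rhom_prod[OF hH] rhom_diff[OF hH] rhom_1[OF hH] mpoly_hom_Var[OF psi] xc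
        rhom_prod[OF rho] rhom_diff[OF rho] rhom_1[OF rho])
  show "?H (f_data n r s t i) = rho (Fb n r s t i x)"
    unfolding f_data_def Fb_def
    by (simp add: rhom_sum[OF hH] rhom_mult[OF hH] xc dl rhom_sum[OF rho] rhom_mult[OF rho])
  show "?H (p_data n r s) = rho (Pb n r s x)"
    unfolding p_data_def Pb_def
    by (simp add: rhom_prod[OF hH] rhom_diff[OF hH] rhom_1[OF hH] dl rhom_prod[OF rho] rhom_diff[OF rho] rhom_1[OF rho])
  show "?H (B_poly n) = (\<Sum>H\<in>Pow {1..n}. psi (Var H) * rho (\<Prod>l\<in>H. x l))"
    unfolding B_poly_def
    by (simp add: rhom_sum[OF hH] rhom_mult[OF hH] rhom_prod[OF hH] mpoly_hom_Const[OF psi]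
        mpoly_hom_Var[OF psi] rhom_prod[OF rho])
qed



lemma bit_idem: "(b::bit) * b = b" using bit_cases[of b] by auto

lemma claim3:
  assumes D: "\<forall>j\<in>{1..r}. \<forall>k\<in>{1..r}. j \<noteq> k \<longrightarrow> (\<exists>e\<in>{1..n}. s j e \<noteq> s k e)"
    and sup: "\<forall>S. S \<notin> Pow {1..n} \<longrightarrow> c S = 0"
  shows "(\<forall>P\<in>ker_Phi n r s t i. mpoly_eval P (emb \<circ> c) = 0) \<longleftrightarrow> (\<forall>j\<in>{1..r}. bool_fun n c (s j) = t j i)"
proof
  let ?P0 = "f_data n r s t i + B_poly n * p_data n r s"
  let ?W = "W n r s t i"
  let ?N = "{1..n}"
  have finN: "finite ?N" by simp
  assume V: "\<forall>P\<in>ker_Phi n r s t i. mpoly_eval P (emb \<circ> c) = 0"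
  show "\<forall>j\<in>{1..r}. bool_fun n c (s j) = t j i"
  proof
    fix j assume j: "j \<in> {1..r}"
    define rho :: "bit \<Rightarrow> (nat set, F2bar) mpoly" where "rho = Const \<circ> emb"
    have rho: "rhom rho" unfolding rho_def by (rule rhom_comp[OF rhom_Const rhom_emb])
    have idem: "(rho \<circ> s j) v * (rho \<circ> s j) v = (rho \<circ> s j) v" for v
      using rhom_mult[OF rho, of "s j v" "s j v", symmetric] by (simp add: bit_idem)
    have red: "mpoly_hom id (rho \<circ> s j) ?P0 = (\<Sum>S\<in>Pow ?N. ?W S * (\<Prod>l\<in>S. (rho \<circ> s j) l))"
      unfolding W_unfold by (subst red_lemma[OF rhom_id idem finN vsub_P0]) simp
    have kc: "mpoly_hom id (rho \<circ> s j) ?P0 = rho (t j i)"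
    proof -
      have hH: "rhom (mpoly_hom id (rho \<circ> s j))" by (rule rhom_mpoly_hom[OF rhom_id])
      have pr: "id (Const (emb b)) = rho b" for b by (simp add: rho_def)
      have x: "\<forall>e\<in>?N. s j e = s j e" by simp
      have e1: "mpoly_hom id (rho \<circ> s j) (f_data n r s t i) = rho (t j i)"
        using KC(1)[OF rhom_id rho pr, of "s j" n r s t i] data_vals(1)[OF D j x, of t i] by (simp only:)
      have e2: "mpoly_hom id (rho \<circ> s j) (p_data n r s) = 0"
        using KC(2)[OF rhom_id rho pr, of "s j" n r s] data_vals(2)[OF D j x] rhom_0[OF rho] by (simp only:)
      show ?thesis by (simp only: rhom_add[OF hH] rhom_mult[OF hH] e1 e2 mult_zero_right add_0_right)
    qed
    define L :: "(nat set, F2bar) mpoly" where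
      "L = (\<Sum>S\<in>Pow ?N. Const (emb (\<Prod>l\<in>S. s j l)) * Var S) - Const (emb (t j i))"
    have LR: "L \<in> PolyRing n" unfolding PolyRing_vsub L_def
      by (intro vsub_diff vsub_sum vsub_mult vsub_Const vsub_Var) auto
    have hC: "rhom (mpoly_hom Const ?W)" by (rule rhom_mpoly_hom[OF rhom_Const])
    have "Phi n r s t i L = (\<Sum>S\<in>Pow ?N. Const (emb (\<Prod>l\<in>S. s j l)) * ?W S) - Const (emb (t j i))"
      unfolding Phi_def L_def
      by (simp add: rhom_diff[OF hC] rhom_sum[OF hC] rhom_mult[OF hC] mpoly_hom_Const[OF rhom_Const]
          mpoly_hom_Var[OF rhom_Const])
    also have "(\<Sum>S\<in>Pow ?N. Const (emb (\<Prod>l\<in>S. s j l)) * ?W S) = (\<Sum>S\<in>Pow ?N. ?W S * (\<Prod>l\<in>S. (rho \<circ> s j) l))"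
    proof (rule sum.cong[OF refl])
      fix S
      have "(\<Prod>l\<in>S. (rho \<circ> s j) l) = rho (\<Prod>l\<in>S. s j l)" by (simp add: rhom_prod[OF rho])
      then show "Const (emb (\<Prod>l\<in>S. s j l)) * ?W S = ?W S * (\<Prod>l\<in>S. (rho \<circ> s j) l)"
        by (simp only:) (simp add: rho_def mult.commute)
    qed
    also have "\<dots> = Const (emb (t j i))" using red kc by (simp add: rho_def)
    finally have "Phi n r s t i L = 0" by simp
    then have "L \<in> ker_Phi n r s t i" using LR by (simp add: ker_Phi_def)
    then have "mpoly_eval L (emb \<circ> c) = 0" using V by blast
    moreover have "mpoly_eval L (emb \<circ> c) = emb (bool_fun n c (s j)) - emb (t j i)"
    proof -
      have h: "rhom (\<lambda>P. mpoly_eval P (emb \<circ> c))" by (rule rhom_mpoly_eval)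
      show ?thesis unfolding L_def bool_fun_def
        by (simp add: rhom_diff[OF h] rhom_sum[OF h] rhom_mult[OF h] eval_Const eval_Var
            rhom_sum[OF rhom_emb] rhom_mult[OF rhom_emb] mult.commute)
    qed
    ultimately show "bool_fun n c (s j) = t j i" by (simp add: emb_inj)
  qed
next
  let ?P0 = "f_data n r s t i + B_poly n * p_data n r s"
  let ?W = "W n r s t i"
  let ?N = "{1..n}"
  have finN: "finite ?N" by simp
  assume fit: "\<forall>j\<in>{1..r}. bool_fun n c (s j) = t j i"
  let ?ev = "\<lambda>Q. mpoly_eval Q (emb \<circ> c)"
  have ev: "rhom ?ev" by (rule rhom_mpoly_eval)
  have evC: "?ev (Const (emb b)) = emb b" for b by (simp add: eval_Const)
  have Wc: "?ev (?W S) = emb (c S)" for S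
  proof (cases "S \<in> Pow ?N")
    case False
    have e: "{m \<in> Poly_Mapping.keys ?P0. Poly_Mapping.keys m = S} = {}"
      using vsub_P0[of n r s t i] False by (auto simp: vsub_def mpoly_vars_def)
    have "?ev (?W S) = 0" by (simp only: W_unfold e sum.empty rhom_0[OF ev])
    then show ?thesis using False sup by (simp add: emb_def)
  next
    case True
    define d where "d = (\<lambda>S. ?ev (?W S) - emb (c S))"
    have "\<forall>S\<in>Pow ?N. d S = 0"
    proof (rule ml_unique[OF finN])
      fix y :: "nat \<Rightarrow> F2bar" assume y01: "\<forall>l. y l = 0 \<or> y l = 1"
      define x :: "nat \<Rightarrow> bit" where "x = (\<lambda>l. if y l = 0 then 0 else 1)"
      have y: "y = emb \<circ> x" using y01 by (auto simp: x_def emb_def fun_eq_iff)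
      have idem: "(emb \<circ> x) v * (emb \<circ> x) v = (emb \<circ> x) v" for v
        using rhom_mult[OF rhom_emb, of "x v" "x v", symmetric] by (simp add: bit_idem)
      have hH: "rhom (mpoly_hom ?ev (emb \<circ> x))" by (rule rhom_mpoly_hom[OF ev])
      have "mpoly_hom ?ev (emb \<circ> x) ?P0 = (\<Sum>S\<in>Pow ?N. ?ev (?W S) * (\<Prod>l\<in>S. (emb \<circ> x) l))"
        unfolding W_unfold by (rule red_lemma[OF ev idem finN vsub_P0])
      moreover have "mpoly_hom ?ev (emb \<circ> x) ?P0 = emb (bool_fun n c x)"
      proof -
        have B: "mpoly_hom ?ev (emb \<circ> x) (B_poly n) = emb (bool_fun n c x)"
          unfolding KC(3)[OF ev rhom_emb evC] bool_fun_def
          by (simp add: eval_Var rhom_sum[OF rhom_emb] rhom_mult[OF rhom_emb])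
        have "mpoly_hom ?ev (emb \<circ> x) ?P0 = emb (Fb n r s t i x + bool_fun n c x * Pb n r s x)"
          by (simp add: rhom_add[OF hH] rhom_mult[OF hH] KC(1,2)[OF ev rhom_emb evC] B
              rhom_add[OF rhom_emb] rhom_mult[OF rhom_emb])
        also have "\<dots> = emb (bool_fun n c x)" using fits_eq[where c=c and t=t and i=i and x=x and s=s and n=n and r=r, OF D fit] by simp
        finally show ?thesis .
      qed
      moreover have "emb (bool_fun n c x) = (\<Sum>S\<in>Pow ?N. emb (c S) * (\<Prod>l\<in>S. (emb \<circ> x) l))"
        unfolding bool_fun_def by (simp add: rhom_sum[OF rhom_emb] rhom_mult[OF rhom_emb] rhom_prod[OF rhom_emb])
      ultimately have "(\<Sum>S\<in>Pow ?N. ?ev (?W S) * (\<Prod>l\<in>S. (emb \<circ> x) l)) = (\<Sum>S\<in>Pow ?N. emb (c S) * (\<Prod>l\<in>S. (emb \<circ> x) l))"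
        by simp
      then show "(\<Sum>S\<in>Pow ?N. d S * (\<Prod>l\<in>S. y l)) = 0"
        unfolding d_def y by (simp add: left_diff_distrib sum_subtractf)
    qed
    then show ?thesis using True by (simp add: d_def)
  qed
  show "\<forall>P\<in>ker_Phi n r s t i. mpoly_eval P (emb \<circ> c) = 0"
  proof
    fix P assume "P \<in> ker_Phi n r s t i"
    then have P0: "Phi n r s t i P = 0" by (simp add: ker_Phi_def)
    have "?ev (Phi n r s t i P) = mpoly_hom (?ev \<circ> Const) (?ev \<circ> ?W) P"
      unfolding Phi_def by (rule mpoly_hom_comp[OF ev rhom_Const])
    also have "?ev \<circ> Const = id" by (simp add: fun_eq_iff eval_Const)
    also have "?ev \<circ> ?W = emb \<circ> c" using Wc by (simp add: fun_eq_iff)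
    finally have eq: "mpoly_eval (Phi n r s t i P) (emb \<circ> c) = mpoly_hom id (emb \<circ> c) P" .
    have z: "mpoly_eval (Phi n r s t i P) (emb \<circ> c) = 0" using P0 rhom_0[OF ev] by simp
    have "mpoly_hom id (emb \<circ> c) P = 0" using eq z by metis
    then show "mpoly_eval P (emb \<circ> c) = 0" by (simp only: mpoly_eval_def)
  qed
qed



lemma zero_in_I_Vncf: "0 \<in> I_Vncf n"
  unfolding I_Vncf_def I_sigma_def ideal_span_def
  by (auto intro!: exI[of _ "{}"])

lemma zero_in_ker: "0 \<in> ker_Phi n r s t i"
  unfolding ker_Phi_def PolyRing_vsub Phi_def by (simp add: vsub_0 mpoly_hom_zero)

lemma vanish_plus:
  fixes I K :: "(nat set, F2bar) mpoly set"
  assumes "0 \<in> I" "0 \<in> K"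
  shows "(\<forall>P\<in>ideal_plus I K. mpoly_eval P b = 0) \<longleftrightarrow>
         (\<forall>P\<in>I. mpoly_eval P b = 0) \<and> (\<forall>P\<in>K. mpoly_eval P b = 0)"
proof -
  have h: "rhom (\<lambda>P. mpoly_eval P b)" by (rule rhom_mpoly_eval)
  show ?thesis
  proof safe
    fix P assume V: "\<forall>P\<in>ideal_plus I K. mpoly_eval P b = 0" and P: "P \<in> I"
    have "P + 0 \<in> ideal_plus I K" using P assms unfolding ideal_plus_def by blast
    thus "mpoly_eval P b = 0" using V by simp
  next
    fix P assume V: "\<forall>P\<in>ideal_plus I K. mpoly_eval P b = 0" and P: "P \<in> K"
    have "0 + P \<in> ideal_plus I K" using P assms unfolding ideal_plus_def by blast
    thus "mpoly_eval P b = 0" using V by simp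
  next
    fix P assume "\<forall>P\<in>I. mpoly_eval P b = 0" "\<forall>P\<in>K. mpoly_eval P b = 0" "P \<in> ideal_plus I K"
    thus "mpoly_eval P b = 0" unfolding ideal_plus_def by (auto simp: rhom_add[OF h])
  qed
qed

theorem mainTheorem2:
  fixes n r i :: nat
    and s t :: "nat \<Rightarrow> nat \<Rightarrow> bit"
  assumes "n \<ge> 1" and "r \<ge> 1" and "i \<in> {1..n}"
    and "\<forall>j\<in>{1..r}. \<forall>k\<in>{1..r}. j \<noteq> k \<longrightarrow> (\<exists>e\<in>{1..n}. s j e \<noteq> s k e)"
  shows "{c :: nat set \<Rightarrow> bit. (\<forall>S. S \<notin> Pow {1..n} \<longrightarrow> c S = 0) \<and>
            (\<forall>P\<in>ideal_plus (I_Vncf n) (ker_Phi n r s t i). mpoly_eval P (emb \<circ> c) = 0)}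
       = {c :: nat set \<Rightarrow> bit. (\<forall>S. S \<notin> Pow {1..n} \<longrightarrow> c S = 0) \<and>
            nested_canalyzing n (bool_fun n c) \<and>
            (\<forall>j\<in>{1..r}. bool_fun n c (s j) = t j i)}"
proof (rule Collect_cong)
  fix c :: "nat set \<Rightarrow> bit"
  show "((\<forall>S. S \<notin> Pow {1..n} \<longrightarrow> c S = 0) \<and>
            (\<forall>P\<in>ideal_plus (I_Vncf n) (ker_Phi n r s t i). mpoly_eval P (emb \<circ> c) = 0)) =
        ((\<forall>S. S \<notin> Pow {1..n} \<longrightarrow> c S = 0) \<and>
            nested_canalyzing n (bool_fun n c) \<and>
            (\<forall>j\<in>{1..r}. bool_fun n c (s j) = t j i))"
  proof (cases "\<forall>S. S \<notin> Pow {1..n} \<longrightarrow> c S = 0")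
    case True
    show ?thesis
      using True vanish_plus[OF zero_in_I_Vncf zero_in_ker, of n n r s t i "emb \<circ> c"]
        claim1[OF assms(1), of c] claim2[OF assms(1) True] claim3[OF assms(4) True, of t i]
      by blast
  qed blast
qed

end
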